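(* Let $U:\mathbb{R}_1\to\mathbb{R}_1$ be as defined in the context, let $a\in\mathbb{N}_1$ and $l\in\mathbb{N}_1$ with $U^l(a)=a$. Then for every $x\in\mathbb{R}_1$ the following are equivalent: (i) the parity sequence $\mathcal{P}_U(x)=(\lfloor U^i(x)\rfloor \bmod 2)_{i\ge 0}$ is eventually periodic with period $s=(a\bmod 2,\,U(a)\bmod 2,\dots,U^{l-1}(a)\bmod 2)$, i.e. there is $j\in\mathbb{N}_0$ such that $(\lfloor U^{i}(x)\rfloor\bmod 2,\dots,\lfloor U^{i+l-1}(x)\rfloor\bmod 2)=s$ for all $i=j+ml$, $m\in\mathbb{N}_0$; (ii) $\mathcal{T}_U(x)$ tends to $\{U^t(a)\}$ from above, i.e. there is $j_0\in\mathbb{N}_0$ such that for every $j\in\{0,1,\dots,l-1\}$ the sequence $\big(U^{kl}(U^{j+j_0}(x))\big)_{k\ge 0}$ converges to $U^j(a)$ as $k\to\infty$ and all of its terms are $\ge U^j(a)$.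
   Context: $\mathbb{R}_1=\{x\in\mathbb{R}:x\ge1\}$, $\mathbb{N}_1=\{1,2,\dots\}$, $\mathbb{N}_0=\{0,1,2,\dots\}$, $\lfloor x\rfloor$ is the floor of $x$. $U:\mathbb{R}_1\to\mathbb{R}_1$ is given by $U(x)=x/2$ if $\lfloor x\rfloor$ is even and $U(x)=(3x+1)/2$ if $\lfloor x\rfloor$ is odd; $U^i$ denotes the $i$-th iterate ($U^0=\mathrm{id}$), and $\mathcal{T}_U(x)=(U^i(x))_{i\ge0}$ is the trajectory of $x$. *)

theory Defs
  imports Complex_Main
begin

text \<open>The map U on [1,oo); defined on all reals, only used on x >= 1.\<close>
definition U :: "real \<Rightarrow> real" where
  "U x = (if even \<lfloor>x\<rfloor> then x / 2 else (3 * x + 1) / 2)"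

end

theory Submission
  imports Defs
begin

definition sl :: "real \<Rightarrow> real" where "sl r = (if even \<lfloor>r\<rfloor> then 1/2 else 3/2)"
definition dl :: "real \<Rightarrow> real" where "dl r = (if even \<lfloor>r\<rfloor> then 0 else 1/2)"

lemma U_sl: "U r = sl r * r + dl r" unfolding U_def sl_def dl_def by auto
lemma sl_pos: "sl r > 0" unfolding sl_def by auto
lemma dl_nonneg: "dl r \<ge> 0" unfolding dl_def by auto

lemma U_nat: assumes "n \<ge> 1" shows "\<exists>m::nat. m \<ge> 1 \<and> U (real n) = real m"
proof (cases "even n")
  case True
  then obtain k where k: "n = 2*k" by blast
  with assms have "k \<ge> 1" by simp
  moreover have "U (real n) = real n / 2"
    using True unfolding U_def by simp
  then have "U (real n) = real k" using k by simp
  ultimately show ?thesis by blast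
next
  case False
  then obtain k where k: "n = 2*k+1" using oddE by blast
  have "U (real n) = (3 * real n + 1) / 2"
    using False unfolding U_def by simp
  then have "U (real n) = real (3*k+2)"
    using k by (simp add: field_simps)
  then show ?thesis by (intro exI[of _ "3*k+2"]) simp
qed

lemma funpow_nat: assumes "a \<ge> 1" shows "\<exists>m::nat. m \<ge> 1 \<and> (U^^i) (real a) = real m"
proof (induction i)
  case 0 then show ?case using assms by auto
next
  case (Suc i)
  then obtain m where "m \<ge> 1" "(U^^i) (real a) = real m" by blast
  then show ?case using U_nat[of m] by auto
qed

lemma U_affine:
  assumes "\<lfloor>z\<rfloor> mod 2 = \<lfloor>real n\<rfloor> mod 2"
  shows "U z = U (real n) + sl (real n) * (z - real n)"
proof -
  have "even \<lfloor>z\<rfloor> \<longleftrightarrow> even \<lfloor>real n\<rfloor>" using assms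
    by (metis even_iff_mod_2_eq_zero)
  then show ?thesis unfolding U_def sl_def by (auto simp: field_simps)
qed

theorem proposition1:
  fixes a l :: nat and x :: real
  assumes "a \<ge> 1" and "l \<ge> 1" and "(U ^^ l) (real a) = real a"
    and "x \<ge> 1"
  shows "(\<exists>j::nat. \<forall>m::nat. \<forall>t<l.
            \<lfloor>(U ^^ (j + m * l + t)) x\<rfloor> mod 2 = \<lfloor>(U ^^ t) (real a)\<rfloor> mod 2)
     \<longleftrightarrow>
         (\<exists>j0::nat. \<forall>j<l.
            (\<lambda>k. (U ^^ (k * l)) ((U ^^ (j + j0)) x)) \<longlonglongrightarrow> (U ^^ j) (real a) \<and>
            (\<forall>k. (U ^^ (k * l)) ((U ^^ (j + j0)) x) \<ge> (U ^^ j) (real a)))"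
proof -
  define c where "c i = (U^^i) (real a)" for i
  define P where "P i = (\<Prod>r<i. sl (c r))" for i
  have cnat: "\<exists>n::nat. c i = real n" for i using funpow_nat[OF assms(1), of i] unfolding c_def by blast
  have cSuc: "c (Suc i) = U (c i)" for i by (simp add: c_def)
  have PSuc: "P (Suc i) = P i * sl (c i)" for i by (simp add: P_def)
  have Ppos: "P i > 0" for i unfolding P_def by (intro prod_pos) (simp add: sl_pos)
  have P0: "P 0 = 1" by (simp add: P_def)
  have cl: "c (i + l) = c i" for i
    using assms(3) unfolding c_def by (simp add: funpow_add)
  have cper: "c (i + k*l) = c i" for i k
  proof (induction k)
    case (Suc k)
    have "i + Suc k * l = (i + k*l) + l" by simp
    then show ?case using cl[of "i + k*l"] Suc by metis
  qed simp
  have cmod: "c i = c (i mod l)" for i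
    using cper[of "i mod l" "i div l"] by simp
  have Pl: "P (i + l) = P l * P i" for i
  proof (induction i)
    case (Suc i)
    have "P (Suc i + l) = P (i + l) * sl (c (i + l))" using PSuc[of "i+l"] by simp
    also have "\<dots> = P l * P (Suc i)" using Suc cl[of i] PSuc[of i] by simp
    finally show ?case .
  qed (simp add: P0)
  have Pper: "P (i + k*l) = P i * P l ^ k" for i k
  proof (induction k)
    case (Suc k)
    have "i + Suc k * l = (i + k*l) + l" by simp
    then have "P (i + Suc k * l) = P ((i + k*l) + l)" by metis
    also have "\<dots> = P l * P (i + k*l)" by (rule Pl)
    finally show ?case using Suc by simp
  qed simp
  have c0: "c 0 = real a" by (simp add: c_def)
  have cpos: "c 0 > 0" using c0 assms(1) by simp
  have key: "c i \<ge> P i * c 0 \<and> (c i = P i * c 0 \<longrightarrow> P i = (1/2)^i)" for i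
  proof (induction i)
    case 0 then show ?case by (simp add: P0)
  next
    case (Suc i)
    have e: "c (Suc i) = sl (c i) * c i + dl (c i)" using cSuc U_sl by simp
    have m: "sl (c i) * (P i * c 0) \<le> sl (c i) * c i"
      using Suc.IH sl_pos[of "c i"] by (intro mult_left_mono) auto
    have ge: "c (Suc i) \<ge> P (Suc i) * c 0"
      using e m dl_nonneg[of "c i"] PSuc[of i] by (simp add: algebra_simps)
    moreover have "P (Suc i) = (1/2)^(Suc i)" if eq: "c (Suc i) = P (Suc i) * c 0"
    proof -
      have "dl (c i) = 0" using e m dl_nonneg[of "c i"] PSuc[of i] eq by (simp add: algebra_simps)
      then have ev: "even \<lfloor>c i\<rfloor>" unfolding dl_def by (auto split: if_splits)
      then have s: "sl (c i) = 1/2" unfolding sl_def by simp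
      have "sl (c i) * (P i * c 0) = sl (c i) * c i"
        using e m dl_nonneg[of "c i"] PSuc[of i] eq \<open>dl (c i) = 0\<close> by (simp add: algebra_simps)
      then have "c i = P i * c 0" using sl_pos[of "c i"] by simp
      then have "P i = (1/2)^i" using Suc.IH by simp
      then show ?thesis using PSuc[of i] s by simp
    qed
    ultimately show ?case by blast
  qed
  have Plt: "P l < 1"
  proof (rule ccontr)
    assume "\<not> P l < 1"
    then have h: "P l \<ge> 1" by simp
    have "c l = c 0" using cl[of 0] by simp
    with key[of l] have "c 0 \<ge> P l * c 0" by simp
    moreover have "P l * c 0 \<ge> c 0" using h cpos by simp
    ultimately have "c l = P l * c 0" using \<open>c l = c 0\<close> by simp
    with key[of l] have "P l = (1/2)^l" by simp
    moreover have "(1/2::real)^l < 1" using assms(2) by (simp add: power_less_one_iff)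
    ultimately show False using h by simp
  qed
  show ?thesis
  proof
    assume "\<exists>j::nat. \<forall>m::nat. \<forall>t<l.
            \<lfloor>(U ^^ (j + m * l + t)) x\<rfloor> mod 2 = \<lfloor>(U ^^ t) (real a)\<rfloor> mod 2"
    then obtain j where hj: "\<forall>m::nat. \<forall>t<l.
            \<lfloor>(U ^^ (j + m * l + t)) x\<rfloor> mod 2 = \<lfloor>c t\<rfloor> mod 2" unfolding c_def by blast
    define y where "y = (U^^j) x"
    define d where "d = y - real a"
    have Hpar: "\<lfloor>(U^^i) y\<rfloor> mod 2 = \<lfloor>c i\<rfloor> mod 2" for i
    proof -
      have "i mod l < l" using assms(2) by simp
      with hj have "\<lfloor>(U ^^ (j + (i div l) * l + i mod l)) x\<rfloor> mod 2 = \<lfloor>c (i mod l)\<rfloor> mod 2" by blast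
      moreover have "j + (i div l) * l + i mod l = i + j" by simp
      ultimately show ?thesis using cmod[of i] by (simp add: y_def funpow_add)
    qed
    have main: "(U^^i) y = c i + P i * d" for i
    proof (induction i)
      case 0 then show ?case by (simp add: c0 P0 d_def)
    next
      case (Suc i)
      obtain n where n: "c i = real n" using cnat by blast
      have "(U^^Suc i) y = U ((U^^i) y)" by simp
      also have "\<dots> = U (real n) + sl (real n) * ((U^^i) y - real n)"
        by (rule U_affine) (use Hpar[of i] n in simp)
      also have "\<dots> = c (Suc i) + P (Suc i) * d"
        using Suc n cSuc[of i] PSuc[of i] by simp
      finally show ?case .
    qed
    have dnn: "d \<ge> 0"
    proof (rule ccontr)
      assume "\<not> d \<ge> 0"
      then have dneg: "d < 0" by simp
      have lt: "P i * d < -1" for i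
      proof -
        obtain n where n: "c i = real n" using cnat by blast
        define e where "e = P i * d"
        have "e < 0" using dneg Ppos[of i] by (simp add: e_def mult_pos_neg)
        have "\<lfloor>real n + e\<rfloor> mod 2 = \<lfloor>real n\<rfloor> mod 2" using Hpar[of i] main[of i] n e_def by simp
        then have "(int n + \<lfloor>e\<rfloor>) mod 2 = int n mod 2" by simp
        then have ev: "\<lfloor>e\<rfloor> mod 2 = 0" by presburger
        have "\<lfloor>e\<rfloor> < 0" using \<open>e < 0\<close> by simp
        with ev have "\<lfloor>e\<rfloor> \<le> -2" by presburger
        then have "e < -1" by linarith
        then show ?thesis by (simp add: e_def)
      qed
      have "(\<lambda>k. P l ^ k * d) \<longlonglongrightarrow> 0"
        by (intro tendsto_mult_left_zero LIMSEQ_power_zero) (use Plt Ppos[of l] in simp)+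
      then have "eventually (\<lambda>k. P l ^ k * d > -1) sequentially"
        by (rule order_tendstoD(1)) simp
      then obtain k where "P l ^ k * d > -1" by (auto simp: eventually_sequentially)
      moreover have "P (0 + k*l) * d < -1" by (rule lt)
      ultimately show False using Pper[of 0 k] P0 by simp
    qed
    show "\<exists>j0::nat. \<forall>t<l.
            (\<lambda>k. (U ^^ (k * l)) ((U ^^ (t + j0)) x)) \<longlonglongrightarrow> (U ^^ t) (real a) \<and>
            (\<forall>k. (U ^^ (k * l)) ((U ^^ (t + j0)) x) \<ge> (U ^^ t) (real a))"
    proof (intro exI[of _ j] allI impI conjI)
      fix t k assume "t < l"
      have eq: "(U ^^ (k * l)) ((U ^^ (t + j)) x) = c t + P t * d * P l ^ k" for k
      proof -
        have "(U ^^ (k * l)) ((U ^^ (t + j)) x) = (U^^(k*l + (t + j))) x"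
          by (simp only: funpow_add comp_apply)
        also have "k*l + (t + j) = (t + k*l) + j" by simp
        also have "(U^^((t + k*l) + j)) x = (U^^(t + k*l)) y"
          by (simp only: funpow_add comp_apply y_def)
        finally have "(U ^^ (k * l)) ((U ^^ (t + j)) x) = (U^^(t + k*l)) y" .
        also have "\<dots> = c t + P t * d * P l ^ k" using main cper Pper by simp
        finally show ?thesis .
      qed
      have "(\<lambda>k. c t + P t * d * P l ^ k) \<longlonglongrightarrow> c t + P t * d * 0"
        by (intro tendsto_intros LIMSEQ_power_zero) (use Plt Ppos[of l] in simp)+
      then show "(\<lambda>k. (U ^^ (k * l)) ((U ^^ (t + j)) x)) \<longlonglongrightarrow> (U ^^ t) (real a)"
        unfolding eq by (simp add: c_def)
      show "(U ^^ (k * l)) ((U ^^ (t + j)) x) \<ge> (U ^^ t) (real a)"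
        unfolding eq using dnn Ppos[of t] Ppos[of l] by (simp add: c_def)
    qed
  next
    assume "\<exists>j0::nat. \<forall>j<l.
            (\<lambda>k. (U ^^ (k * l)) ((U ^^ (j + j0)) x)) \<longlonglongrightarrow> (U ^^ j) (real a) \<and>
            (\<forall>k. (U ^^ (k * l)) ((U ^^ (j + j0)) x) \<ge> (U ^^ j) (real a))"
    then obtain j0 where h: "\<forall>t<l.
            (\<lambda>k. (U ^^ (k * l)) ((U ^^ (t + j0)) x)) \<longlonglongrightarrow> c t \<and>
            (\<forall>k. (U ^^ (k * l)) ((U ^^ (t + j0)) x) \<ge> c t)" unfolding c_def by blast
    have "\<forall>t<l. \<exists>K. \<forall>k\<ge>K. \<lfloor>(U ^^ (k * l)) ((U ^^ (t + j0)) x)\<rfloor> = \<lfloor>c t\<rfloor>"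
    proof (intro allI impI)
      fix t assume "t < l"
      with h have lim: "(\<lambda>k. (U ^^ (k * l)) ((U ^^ (t + j0)) x)) \<longlonglongrightarrow> c t"
        and ge: "\<forall>k. (U ^^ (k * l)) ((U ^^ (t + j0)) x) \<ge> c t" by blast+
      obtain n where n: "c t = real n" using cnat by blast
      have "eventually (\<lambda>k. (U ^^ (k * l)) ((U ^^ (t + j0)) x) < c t + 1) sequentially"
        by (rule order_tendstoD(2)[OF lim]) simp
      then obtain K where K: "\<forall>k\<ge>K. (U ^^ (k * l)) ((U ^^ (t + j0)) x) < c t + 1"
        by (auto simp: eventually_sequentially)
      show "\<exists>K. \<forall>k\<ge>K. \<lfloor>(U ^^ (k * l)) ((U ^^ (t + j0)) x)\<rfloor> = \<lfloor>c t\<rfloor>"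
      proof (intro exI[of _ K] allI impI)
        fix k assume "k \<ge> K"
        with K ge[rule_format, of k] n show "\<lfloor>(U ^^ (k * l)) ((U ^^ (t + j0)) x)\<rfloor> = \<lfloor>c t\<rfloor>"
          by (simp add: floor_eq_iff)
      qed
    qed
    then obtain Kf where Kf: "\<forall>t<l. \<forall>k\<ge>Kf t. \<lfloor>(U ^^ (k * l)) ((U ^^ (t + j0)) x)\<rfloor> = \<lfloor>c t\<rfloor>"
      by metis
    define K where "K = (\<Sum>t<l. Kf t)"
    have KK: "Kf t \<le> K" if "t < l" for t
      unfolding K_def using that by (intro member_le_sum) auto
    show "\<exists>j::nat. \<forall>m::nat. \<forall>t<l.
            \<lfloor>(U ^^ (j + m * l + t)) x\<rfloor> mod 2 = \<lfloor>(U ^^ t) (real a)\<rfloor> mod 2"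
    proof (intro exI[of _ "j0 + K*l"] allI impI)
      fix m t assume "t < l"
      have "j0 + K*l + m * l + t = (K+m) * l + (t + j0)" by (simp add: algebra_simps)
      then have "(U ^^ (j0 + K*l + m * l + t)) x = (U ^^ ((K+m) * l)) ((U ^^ (t + j0)) x)"
        by (simp only: funpow_add comp_apply)
      moreover have "\<lfloor>(U ^^ ((K+m) * l)) ((U ^^ (t + j0)) x)\<rfloor> = \<lfloor>c t\<rfloor>"
        using Kf \<open>t < l\<close> KK[OF \<open>t < l\<close>] by simp
      ultimately show "\<lfloor>(U ^^ (j0 + K*l + m * l + t)) x\<rfloor> mod 2 = \<lfloor>(U ^^ t) (real a)\<rfloor> mod 2"
        by (simp add: c_def)
    qed
  qed
qed

end
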